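(* Let $\rho$ be a mixed memory over a set $Y$ of program variables and let $X\subseteq Y$. Let $\mathbf{u}$ be a fresh unentangled ghost of the same type as $X$ and define $\mathrm{class}(X) := (X\equiv_{cl}\mathbf{u})$. Then $\rho\models\mathrm{class}(X)$ iff $\rho$ is classical in $X$, i.e., $\rho=\sum_i |i\rangle\langle i|_X\otimes\rho_i$ for some mixed memories $\rho_i$ over $Y\setminus X$.
   Context: Variables have types and are of three disjoint kinds: program variables, entangled ghosts, unentangled ghosts. $\ell^2[V]$ is the Hilbert space with orthonormal basis indexed by assignments on $V$; $\ell^2[V\cup W]\cong\ell^2[V]\otimes\ell^2[W]$. Mixed memories over $V$ are positive trace-class operators on $\ell^2[V]$; $\mathrm{tr}_W$ is partial trace. A mixed memory over $V\cup W$ is $(V,W)$-separable if it is a convergent sum $\sum_i\rho_i\otimes\rho_i'$ of mixed memories over $V$ and $W$. $\mathrm{supp}\,\rho$ is the closure of the range of $\rho$. A predicate over $V$ is a closed subspace of $\ell^2[V]$; predicates over different variable sets are identified if they agree after tensoring with the full spaces of missing variables. Classical equality: for disjoint lists $W,W'\subseteq V$ of the same type $T$, $W\equiv_{cl}W'$ is the closed span of all $|i\rangle_W\otimes|i\rangle_{W'}\otimes\psi$ with $i\in T$ and $\psi\in\ell^2[V\setminus(W\cup W')]$. For program variables $X$, entangled ghosts $E$, unentangled ghosts $U$ and a predicate $A$ over $X\cup E\cup U$, a mixed memory $\rho$ over $X$ satisfies $A$ ($\rho\models A$) iff there exists an $(X\cup E,U)$-separable mixed memory $\rho^\circ$ over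 $X\cup E\cup U$ with $\mathrm{supp}\,\rho^\circ\subseteq A$ and $\mathrm{tr}_{E\cup U}\rho^\circ=\rho$. *)

theory Defs
  imports "HOL-Analysis.Analysis"
begin

(* Variables have type 'v, values have type 'val; T x is the type (set of values) of variable x.
   An assignment on V is a function that is typed on V and equals undefined outside V. *)

definition asg :: "('v \<Rightarrow> 'val set) \<Rightarrow> 'v set \<Rightarrow> ('v \<Rightarrow> 'val) set" where
  "asg T V = {m. (\<forall>x\<in>V. m x \<in> T x) \<and> (\<forall>x. x \<notin> V \<longrightarrow> m x = undefined)}"

definition restr :: "'v set \<Rightarrow> ('v \<Rightarrow> 'val) \<Rightarrow> ('v \<Rightarrow> 'val)" where
  "restr V m = (\<lambda>x. if x \<in> V then m x else undefined)"

definition merge :: "'v set \<Rightarrow> ('v \<Rightarrow> 'val) \<Rightarrow> ('v \<Rightarrow> 'val) \<Rightarrow> ('v \<Rightarrow> 'val)" where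
  "merge W a c = (\<lambda>x. if x \<in> W then c x else a x)"

definition ell2 :: "('v \<Rightarrow> 'val set) \<Rightarrow> 'v set \<Rightarrow> (('v \<Rightarrow> 'val) \<Rightarrow> complex) set" where
  "ell2 T V = {\<psi>. (\<forall>m. m \<notin> asg T V \<longrightarrow> \<psi> m = 0) \<and> (\<lambda>m. (cmod (\<psi> m))^2) summable_on UNIV}"

definition l2norm :: "(('v \<Rightarrow> 'val) \<Rightarrow> complex) \<Rightarrow> real" where
  "l2norm \<psi> = sqrt (\<Sum>\<^sub>\<infinity>m. (cmod (\<psi> m))^2)"

(* Operators on ell2[V] are represented by their matrix entries K a b = <e_a, K e_b>.
   A mixed memory over V: positive trace-class operator, i.e. a kernel supported on asg V x asg V
   that is positive semidefinite and has summable diagonal (its trace). *)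
definition mixed :: "('v \<Rightarrow> 'val set) \<Rightarrow> 'v set \<Rightarrow> (('v \<Rightarrow> 'val) \<Rightarrow> ('v \<Rightarrow> 'val) \<Rightarrow> complex) \<Rightarrow> bool" where
  "mixed T V K \<longleftrightarrow>
     (\<forall>a b. a \<notin> asg T V \<or> b \<notin> asg T V \<longrightarrow> K a b = 0) \<and>
     (\<forall>F c. finite F \<longrightarrow> F \<subseteq> asg T V \<longrightarrow>
        Im (\<Sum>a\<in>F. \<Sum>b\<in>F. cnj (c a) * K a b * c b) = 0 \<and>
        Re (\<Sum>a\<in>F. \<Sum>b\<in>F. cnj (c a) * K a b * c b) \<ge> 0) \<and>
     (\<lambda>a. Re (K a a)) summable_on asg T V"

definition tensor :: "('v \<Rightarrow> 'val set) \<Rightarrow> 'v set \<Rightarrow> 'v set \<Rightarrow>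
    (('v \<Rightarrow> 'val) \<Rightarrow> ('v \<Rightarrow> 'val) \<Rightarrow> complex) \<Rightarrow> (('v \<Rightarrow> 'val) \<Rightarrow> ('v \<Rightarrow> 'val) \<Rightarrow> complex) \<Rightarrow>
    (('v \<Rightarrow> 'val) \<Rightarrow> ('v \<Rightarrow> 'val) \<Rightarrow> complex)" where
  "tensor T V W K L = (\<lambda>a b. if a \<in> asg T (V \<union> W) \<and> b \<in> asg T (V \<union> W)
       then K (restr V a) (restr V b) * L (restr W a) (restr W b) else 0)"

definition ptrace :: "('v \<Rightarrow> 'val set) \<Rightarrow> 'v set \<Rightarrow> 'v set \<Rightarrow>
    (('v \<Rightarrow> 'val) \<Rightarrow> ('v \<Rightarrow> 'val) \<Rightarrow> complex) \<Rightarrow> (('v \<Rightarrow> 'val) \<Rightarrow> ('v \<Rightarrow> 'val) \<Rightarrow> complex)" where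
  "ptrace T V W K = (\<lambda>a b. if a \<in> asg T V \<and> b \<in> asg T V
       then (\<Sum>\<^sub>\<infinity>c\<in>asg T W. K (merge W a c) (merge W b c)) else 0)"

definition separable :: "('v \<Rightarrow> 'val set) \<Rightarrow> 'v set \<Rightarrow> 'v set \<Rightarrow>
    (('v \<Rightarrow> 'val) \<Rightarrow> ('v \<Rightarrow> 'val) \<Rightarrow> complex) \<Rightarrow> bool" where
  "separable T V W K \<longleftrightarrow> (\<exists>R L. (\<forall>i::nat. mixed T V (R i) \<and> mixed T W (L i)) \<and>
       (\<forall>a b. ((\<lambda>i. tensor T V W (R i) (L i) a b) has_sum K a b) UNIV))"

definition kapply :: "(('v \<Rightarrow> 'val) \<Rightarrow> ('v \<Rightarrow> 'val) \<Rightarrow> complex) \<Rightarrow> (('v \<Rightarrow> 'val) \<Rightarrow> complex) \<Rightarrow> (('v \<Rightarrow> 'val) \<Rightarrow> complex)" where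
  "kapply K \<psi> = (\<lambda>a. \<Sum>\<^sub>\<infinity>b. K a b * \<psi> b)"

definition l2closure :: "('v \<Rightarrow> 'val set) \<Rightarrow> 'v set \<Rightarrow> (('v \<Rightarrow> 'val) \<Rightarrow> complex) set \<Rightarrow> (('v \<Rightarrow> 'val) \<Rightarrow> complex) set" where
  "l2closure T V S = {\<psi> \<in> ell2 T V. \<exists>f. (\<forall>n::nat. f n \<in> S) \<and> (\<lambda>n. l2norm (\<lambda>a. f n a - \<psi> a)) \<longlonglongrightarrow> 0}"

definition supp :: "('v \<Rightarrow> 'val set) \<Rightarrow> 'v set \<Rightarrow> (('v \<Rightarrow> 'val) \<Rightarrow> ('v \<Rightarrow> 'val) \<Rightarrow> complex) \<Rightarrow> (('v \<Rightarrow> 'val) \<Rightarrow> complex) set" where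
  "supp T V K = l2closure T V (kapply K ` ell2 T V)"

(* predicate over V = closed subspace of ell2[V] *)
definition closed_subspace :: "('v \<Rightarrow> 'val set) \<Rightarrow> 'v set \<Rightarrow> (('v \<Rightarrow> 'val) \<Rightarrow> complex) set \<Rightarrow> bool" where
  "closed_subspace T V A \<longleftrightarrow> A \<subseteq> ell2 T V \<and> (\<lambda>_. 0) \<in> A \<and>
     (\<forall>\<phi>\<in>A. \<forall>\<psi>\<in>A. (\<lambda>a. \<phi> a + \<psi> a) \<in> A) \<and> (\<forall>c. \<forall>\<psi>\<in>A. (\<lambda>a. c * \<psi> a) \<in> A) \<and>
     (\<forall>f \<psi>. (\<forall>n::nat. f n \<in> A) \<longrightarrow> \<psi> \<in> ell2 T V \<longrightarrow> (\<lambda>n. l2norm (\<lambda>a. f n a - \<psi> a)) \<longlonglongrightarrow> 0 \<longrightarrow> \<psi> \<in> A)"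

definition closed_span :: "('v \<Rightarrow> 'val set) \<Rightarrow> 'v set \<Rightarrow> (('v \<Rightarrow> 'val) \<Rightarrow> complex) set \<Rightarrow> (('v \<Rightarrow> 'val) \<Rightarrow> complex) set" where
  "closed_span T V S = \<Inter>{A. closed_subspace T V A \<and> S \<subseteq> A}"

(* Classical equality X \<equiv>cl u over V, where the type of the single variable u is identified with
   the type of X (the assignments on X) via the bijection enc:
   closed span of |i>_X \<otimes> |enc i>_u \<otimes> \<psi>,  i \<in> asg X, \<psi> \<in> ell2[V - X - {u}] *)
definition cl_eq :: "('v \<Rightarrow> 'val set) \<Rightarrow> 'v set \<Rightarrow> 'v set \<Rightarrow> 'v \<Rightarrow> (('v \<Rightarrow> 'val) \<Rightarrow> 'val) \<Rightarrow>
    (('v \<Rightarrow> 'val) \<Rightarrow> complex) set" where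
  "cl_eq T V X u enc = closed_span T V
     {\<phi>. \<exists>i\<in>asg T X. \<exists>\<psi>\<in>ell2 T (V - X - {u}).
        \<phi> = (\<lambda>a. if a \<in> asg T V \<and> restr X a = i \<and> a u = enc i
                  then \<psi> (restr (V - X - {u}) a) else 0)}"

definition sat :: "('v \<Rightarrow> 'val set) \<Rightarrow> 'v set \<Rightarrow> 'v set \<Rightarrow> 'v set \<Rightarrow> (('v \<Rightarrow> 'val) \<Rightarrow> complex) set \<Rightarrow>
    (('v \<Rightarrow> 'val) \<Rightarrow> ('v \<Rightarrow> 'val) \<Rightarrow> complex) \<Rightarrow> bool" where
  "sat T Y E U A \<rho> \<longleftrightarrow> (\<exists>\<rho>o. mixed T (Y \<union> E \<union> U) \<rho>o \<and> separable T (Y \<union> E) U \<rho>o \<and>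
       supp T (Y \<union> E \<union> U) \<rho>o \<subseteq> A \<and> ptrace T Y (E \<union> U) \<rho>o = \<rho>)"

definition classical_in :: "('v \<Rightarrow> 'val set) \<Rightarrow> 'v set \<Rightarrow> 'v set \<Rightarrow>
    (('v \<Rightarrow> 'val) \<Rightarrow> ('v \<Rightarrow> 'val) \<Rightarrow> complex) \<Rightarrow> bool" where
  "classical_in T Y X \<rho> \<longleftrightarrow> (\<exists>R. (\<forall>i\<in>asg T X. mixed T (Y - X) (R i)) \<and>
     (\<forall>a b. ((\<lambda>i. tensor T X (Y - X) (\<lambda>a' b'. if a' = i \<and> b' = i then 1 else 0) (R i) a b)
              has_sum \<rho> a b) (asg T X)))"

end

theory Submission
  imports Defs
begin

lemma mixed_zero: "mixed T V K \<Longrightarrow> a \<notin> asg T V \<or> b \<notin> asg T V \<Longrightarrow> K a b = 0"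
  unfolding mixed_def by blast

lemma mixed_form: "mixed T V K \<Longrightarrow> finite F \<Longrightarrow> F \<subseteq> asg T V \<Longrightarrow>
   Im (\<Sum>a\<in>F. \<Sum>b\<in>F. cnj (c a) * K a b * c b) = 0 \<and> Re (\<Sum>a\<in>F. \<Sum>b\<in>F. cnj (c a) * K a b * c b) \<ge> 0"
  unfolding mixed_def by blast

lemma mixed_diag: assumes "mixed T V K" shows "Im (K a a) = 0" "Re (K a a) \<ge> 0"
proof -
  have "Im (K a a) = 0 \<and> Re (K a a) \<ge> 0"
  proof (cases "a \<in> asg T V")
    case True
    from mixed_form[OF assms, of "{a}" "\<lambda>_. 1"] True show ?thesis by simp
  next
    case False then show ?thesis using mixed_zero[OF assms] by simp
  qed
  then show "Im (K a a) = 0" "Re (K a a) \<ge> 0" by auto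
qed

lemma mixed_herm: assumes "mixed T V K" shows "K a b = cnj (K b a)"
proof (cases "a \<in> asg T V \<and> b \<in> asg T V")
  case False then show ?thesis using mixed_zero[OF assms] by auto
next
  case True
  show ?thesis
  proof (cases "a = b")
    case True then show ?thesis using mixed_diag[OF assms, of a] by (simp add: complex_eq_iff)
  next
    case ne: False
    from mixed_form[OF assms, of "{a,b}" "\<lambda>_. 1"] True ne
    have 1: "Im (K a b + K b a) = 0" using mixed_diag[OF assms, of a] mixed_diag[OF assms, of b] by simp
    from mixed_form[OF assms, of "{a,b}" "\<lambda>x. if x = a then 1 else \<i>"] True ne
    have 2: "Re (K a b) = Re (K b a)" using mixed_diag[OF assms, of a] mixed_diag[OF assms, of b]
      by (simp add: algebra_simps)
    from 1 2 show ?thesis by (simp add: complex_eq_iff)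
  qed
qed

lemma form2: assumes "a \<noteq> b"
  shows "(\<Sum>x\<in>{a,b}. \<Sum>y\<in>{a,b}. cnj (c x) * K x y * c y) =
   cnj (c a) * K a a * c a + cnj (c a) * K a b * c b + cnj (c b) * K b a * c a + cnj (c b) * K b b * c b"
  using assms by (simp add: algebra_simps)

lemma cmod_sq: "cmod z * cmod z = Re z * Re z + Im z * Im z"
  by (metis cmod_power2 power2_eq_square)

lemma cs_aux1: fixes z :: complex and p q :: real
  shows "Re (cnj (of_real q) * of_real p * of_real q + cnj (of_real q) * z * (- cnj z) + cnj (- cnj z) * cnj z * of_real q + cnj (- cnj z) * of_real q * (- cnj z))
     = q * (p * q - (cmod z)^2)"
  by (simp add: algebra_simps cmod_sq power2_eq_square)

lemma cs_aux2: fixes z :: complex and p :: real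
  shows "Re (cnj (- z) * of_real p * (- z) + cnj (- z) * z * of_real (p+1) + cnj (of_real (p+1)) * cnj z * (- z) + cnj (of_real (p+1)) * 0 * of_real (p+1))
     = - (p + 2) * (cmod z)^2"
  by (simp add: algebra_simps cmod_sq power2_eq_square)

lemma mixed_cs: assumes "mixed T V K" shows "(cmod (K a b))^2 \<le> Re (K a a) * Re (K b b)"
proof (cases "a \<in> asg T V \<and> b \<in> asg T V")
  case False then show ?thesis using mixed_zero[OF assms] mixed_diag[OF assms] by auto
next
  case True
  show ?thesis
  proof (cases "a = b")
    case True then show ?thesis using mixed_diag[OF assms, of a]
      by (simp add: cmod_eq_Re power2_eq_square)
  next
    case ne: False
    define p where "p = Re (K a a)"
    define q where "q = Re (K b b)"
    define z where "z = K a b"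
    have Kaa: "K a a = of_real p" using mixed_diag[OF assms, of a] by (simp add: p_def complex_eq_iff)
    have Kbb: "K b b = of_real q" using mixed_diag[OF assms, of b] by (simp add: q_def complex_eq_iff)
    have Kba: "K b a = cnj z" using mixed_herm[OF assms, of b a] by (simp add: z_def)
    have p0: "p \<ge> 0" "q \<ge> 0" using mixed_diag[OF assms] p_def q_def by auto
    show ?thesis
    proof (cases "q = 0")
      case False
      from mixed_form[OF assms, of "{a,b}" "\<lambda>x. if x = a then of_real q else - cnj z"] True ne
      have "0 \<le> q * (p * q - (cmod z)^2)"
        unfolding form2[OF ne] using cs_aux1[where z=z and p=p and q=q] by (simp add: Kaa Kbb Kba z_def)
      then have "0 \<le> p * q - (cmod z)^2" using False p0
        by (simp add: zero_le_mult_iff)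
      then show ?thesis by (simp add: p_def q_def z_def)
    next
      case q0: True
      from mixed_form[OF assms, of "{a,b}" "\<lambda>x. if x = a then - z else of_real (p+1)"] True ne
      have "0 \<le> - (p + 2) * (cmod z)^2"
        unfolding form2[OF ne] using cs_aux2[where z=z and p=p] by (simp add: Kaa Kbb Kba z_def q0)
      then have "(p + 2) * (cmod z)^2 \<le> 0" by (simp add: algebra_simps)
      then have "(cmod z)^2 \<le> 0" using p0 by (simp add: mult_le_0_iff)
      then have "cmod z = 0" by simp
      then show ?thesis using p0 by (simp add: p_def q_def z_def)
    qed
  qed
qed

lemma mixed_diag_summable: assumes "mixed T V K" shows "(\<lambda>a. Re (K a a)) summable_on UNIV"
proof -
  have "(\<lambda>a. Re (K a a)) summable_on asg T V" using assms unfolding mixed_def by blast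
  then show ?thesis
    by (rule summable_on_cong_neutral[THEN iffD1, rotated -1]) (use mixed_zero[OF assms] in auto)
qed

lemma sqrt_amgm: fixes d x :: real assumes "d \<ge> 0" "x \<ge> 0" shows "sqrt d * x \<le> (d + x^2) / 2"
proof -
  have "0 \<le> (sqrt d - x)^2" by simp
  then show ?thesis using assms by (simp add: power2_diff)
qed

lemma kapply_ell2: assumes K: "mixed T V K" and psi: "\<psi> \<in> ell2 T V"
  shows "kapply K \<psi> \<in> ell2 T V"
proof -
  define d where "d = (\<lambda>a. Re (K a a))"
  have d0: "d a \<ge> 0" for a using mixed_diag[OF K] d_def by auto
  have dsum: "d summable_on UNIV" using mixed_diag_summable[OF K] d_def by simp
  have psum: "(\<lambda>b. (cmod (\<psi> b))^2) summable_on UNIV" using psi unfolding ell2_def by blast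
  define s where "s b = sqrt (d b) * cmod (\<psi> b)" for b
  have s0: "s b \<ge> 0" for b using d0 s_def by simp
  have ssum: "s summable_on UNIV"
  proof (rule summable_on_comparison_test[where f="\<lambda>b. (d b + (cmod (\<psi> b))^2) / 2"])
    show "(\<lambda>b. (d b + (cmod (\<psi> b))^2) / 2) summable_on UNIV"
      using summable_on_cmult_left[OF summable_on_add[OF dsum psum], of "1/2"] by simp
    show "s b \<le> (d b + (cmod (\<psi> b))^2) / 2" for b using sqrt_amgm[OF d0] s_def by simp
  qed (use s0 in auto)
  define S where "S = infsum s UNIV"
  have bnd: "cmod (K a b * \<psi> b) \<le> sqrt (d a) * s b" for a b
  proof -
    have "cmod (K a b) = sqrt ((cmod (K a b))^2)" by simp
    also have "\<dots> \<le> sqrt (d a * d b)" using mixed_cs[OF K, of a b] d_def by (simp del: real_sqrt_abs)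
    also have "\<dots> = sqrt (d a) * sqrt (d b)" by (simp add: real_sqrt_mult)
    finally have "cmod (K a b) * cmod (\<psi> b) \<le> sqrt (d a) * sqrt (d b) * cmod (\<psi> b)" by (simp add: mult_right_mono)
    then show ?thesis by (simp add: s_def norm_mult mult.assoc)
  qed
  have row: "cmod (kapply K \<psi> a) \<le> sqrt (d a) * S" for a
  proof -
    have g: "(\<lambda>b. sqrt (d a) * s b) summable_on UNIV" using summable_on_cmult_right[OF ssum] by simp
    have ab: "(\<lambda>b. norm (K a b * \<psi> b)) summable_on UNIV"
      by (rule summable_on_comparison_test[where f="\<lambda>b. sqrt (d a) * s b"])
         (use g bnd s0 d0 in auto)
    have "cmod (kapply K \<psi> a) \<le> infsum (\<lambda>b. cmod (K a b * \<psi> b)) UNIV"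
      unfolding kapply_def by (rule norm_infsum_bound[OF ab])
    also have "\<dots> \<le> infsum (\<lambda>b. sqrt (d a) * s b) UNIV"
      by (rule infsum_mono[OF ab g bnd])
    also have "\<dots> = sqrt (d a) * S" unfolding S_def by (rule infsum_cmult_right') 
    finally show ?thesis .
  qed
  have "(\<lambda>a. (cmod (kapply K \<psi> a))^2) summable_on UNIV"
  proof (rule summable_on_comparison_test[where f="\<lambda>a. d a * S^2"])
    show "(\<lambda>a. d a * S^2) summable_on UNIV" by (rule summable_on_cmult_left[OF dsum])
    show "(cmod (kapply K \<psi> a))^2 \<le> d a * S^2" for a
    proof -
      have "(cmod (kapply K \<psi> a))^2 \<le> (sqrt (d a) * S)^2" using row[of a] by (simp add: power_mono)
      also have "\<dots> = d a * S^2" using d0 by (simp add: power_mult_distrib)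
      finally show ?thesis .
    qed
  qed auto
  moreover have "kapply K \<psi> a = 0" if "a \<notin> asg T V" for a
    unfolding kapply_def using mixed_zero[OF K] that by simp
  ultimately show ?thesis unfolding ell2_def by blast
qed

lemma l2_point_le: assumes "(\<lambda>m. (cmod (g m))^2) summable_on UNIV" shows "cmod (g a) \<le> l2norm g"
proof -
  have "(\<Sum>m\<in>{a}. (cmod (g m))^2) \<le> (\<Sum>\<^sub>\<infinity>m. (cmod (g m))^2)"
    by (rule finite_sum_le_infsum[OF assms]) auto
  then have "(cmod (g a))^2 \<le> (\<Sum>\<^sub>\<infinity>m. (cmod (g m))^2)" by simp
  then have "sqrt ((cmod (g a))^2) \<le> l2norm g" unfolding l2norm_def using real_sqrt_le_mono by blast
  then show ?thesis by simp
qed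

lemma ell2_diff_summable: assumes "f \<in> ell2 T V" "\<psi> \<in> ell2 T V"
  shows "(\<lambda>m. (cmod (f m - \<psi> m))^2) summable_on UNIV"
proof (rule summable_on_comparison_test[where f="\<lambda>m. 2 * (cmod (f m))^2 + 2 * (cmod (\<psi> m))^2"])
  have a: "(\<lambda>m. (cmod (f m))^2) summable_on UNIV" "(\<lambda>m. (cmod (\<psi> m))^2) summable_on UNIV"
    using assms unfolding ell2_def by auto
  show "(\<lambda>m. 2 * (cmod (f m))^2 + 2 * (cmod (\<psi> m))^2) summable_on UNIV"
    by (intro summable_on_add summable_on_cmult_right a)
  show "(cmod (f m - \<psi> m))^2 \<le> 2 * (cmod (f m))^2 + 2 * (cmod (\<psi> m))^2" for m
  proof -
    have "cmod (f m - \<psi> m) \<le> cmod (f m) + cmod (\<psi> m)" by (rule norm_triangle_ineq4)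
    then have "(cmod (f m - \<psi> m))^2 \<le> (cmod (f m) + cmod (\<psi> m))^2" by (simp add: power_mono)
    also have "\<dots> \<le> 2 * (cmod (f m))^2 + 2 * (cmod (\<psi> m))^2"
    proof -
      have "0 \<le> (cmod (f m) - cmod (\<psi> m))^2" by simp
      then show ?thesis by (simp add: power2_sum power2_diff)
    qed
    finally show ?thesis .
  qed
qed auto

lemma l2_lim_pointwise: assumes "\<And>n. f n \<in> ell2 T V" "\<psi> \<in> ell2 T V"
  and "(\<lambda>n. l2norm (\<lambda>a. f n a - \<psi> a)) \<longlonglongrightarrow> 0"
  shows "(\<lambda>n. f n a) \<longlonglongrightarrow> \<psi> a"
proof (rule LIM_zero_cancel, rule Lim_null_comparison[OF _ assms(3)])
  show "\<forall>\<^sub>F n in sequentially. norm (f n a - \<psi> a) \<le> l2norm (\<lambda>a. f n a - \<psi> a)"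
    using l2_point_le[OF ell2_diff_summable[OF assms(1,2)]] by simp
qed

lemma asg_ext: "a \<in> asg T V \<Longrightarrow> b \<in> asg T V \<Longrightarrow> (\<And>x. x \<in> V \<Longrightarrow> a x = b x) \<Longrightarrow> a = b"
  unfolding asg_def by (rule ext) (metis (mono_tags, lifting) mem_Collect_eq)

lemma asg_out: "a \<in> asg T V \<Longrightarrow> x \<notin> V \<Longrightarrow> a x = undefined"
  unfolding asg_def by blast

lemma asg_in: "a \<in> asg T V \<Longrightarrow> x \<in> V \<Longrightarrow> a x \<in> T x"
  unfolding asg_def by blast

lemma restr_asg: "a \<in> asg T V \<Longrightarrow> W \<subseteq> V \<Longrightarrow> restr W a \<in> asg T W"
  unfolding asg_def restr_def by auto

lemma restr_apply: "restr W a x = (if x \<in> W then a x else undefined)"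
  unfolding restr_def by simp

lemma merge_asg: "a \<in> asg T V \<Longrightarrow> c \<in> asg T W \<Longrightarrow> merge W a c \<in> asg T (V \<union> W)"
  unfolding asg_def merge_def by auto

lemma ell2_add: assumes "f \<in> ell2 T V" "g \<in> ell2 T V" shows "(\<lambda>a. f a + g a) \<in> ell2 T V"
proof -
  have "(\<lambda>a. - g a) \<in> ell2 T V" using assms(2) unfolding ell2_def by auto
  from ell2_diff_summable[OF assms(1) this] show ?thesis using assms unfolding ell2_def by auto
qed

lemma ell2_scale: assumes "f \<in> ell2 T V" shows "(\<lambda>a. c * f a) \<in> ell2 T V"
proof -
  have "(\<lambda>m. (cmod c)^2 * (cmod (f m))^2) summable_on UNIV"
    using assms unfolding ell2_def by (intro summable_on_cmult_right) auto
  then show ?thesis using assms unfolding ell2_def by (auto simp: norm_mult power_mult_distrib)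
qed

definition matchset :: "'v \<Rightarrow> (('v \<Rightarrow> 'val) \<Rightarrow> 'val) \<Rightarrow> 'v set \<Rightarrow> (('v \<Rightarrow> 'val) \<Rightarrow> complex) set" where
  "matchset u enc X = {\<phi>. \<forall>a. \<phi> a \<noteq> 0 \<longrightarrow> a u = enc (restr X a)}"

lemma closed_sub_match: "closed_subspace T V (ell2 T V \<inter> matchset u enc X)"
  unfolding closed_subspace_def
proof (intro conjI allI ballI impI)
  show "ell2 T V \<inter> matchset u enc X \<subseteq> ell2 T V" by blast
  show "(\<lambda>_. 0) \<in> ell2 T V \<inter> matchset u enc X"
    unfolding ell2_def matchset_def by auto
  fix \<phi> \<psi> assume a1: "\<phi> \<in> ell2 T V \<inter> matchset u enc X" and a2: "\<psi> \<in> ell2 T V \<inter> matchset u enc X"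
  then have "(\<lambda>a. \<phi> a + \<psi> a) \<in> ell2 T V" using ell2_add by blast
  moreover have "(\<lambda>a. \<phi> a + \<psi> a) \<in> matchset u enc X"
    using a1 a2 unfolding matchset_def by (auto, metis add.right_neutral)
  ultimately show "(\<lambda>a. \<phi> a + \<psi> a) \<in> ell2 T V \<inter> matchset u enc X" by blast
next
  fix c \<psi> assume a: "\<psi> \<in> ell2 T V \<inter> matchset u enc X"
  then have "(\<lambda>a. c * \<psi> a) \<in> ell2 T V" using ell2_scale by blast
  moreover have "(\<lambda>a. c * \<psi> a) \<in> matchset u enc X"
    using a unfolding matchset_def by auto
  ultimately show "(\<lambda>a. c * \<psi> a) \<in> ell2 T V \<inter> matchset u enc X" by blast
next
  fix f \<psi> assume f: "\<forall>n::nat. f n \<in> ell2 T V \<inter> matchset u enc X" and psi: "\<psi> \<in> ell2 T V"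
    and lim: "(\<lambda>n. l2norm (\<lambda>a. f n a - \<psi> a)) \<longlonglongrightarrow> 0"
  have "\<psi> a = 0" if "a u \<noteq> enc (restr X a)" for a
  proof -
    have "(\<lambda>n. f n a) \<longlonglongrightarrow> \<psi> a" using l2_lim_pointwise[OF _ psi lim] f by blast
    moreover have "(\<lambda>n. f n a) = (\<lambda>n. 0)" using f that unfolding matchset_def by auto
    ultimately show ?thesis using LIMSEQ_unique tendsto_const by metis
  qed
  then show "\<psi> \<in> ell2 T V \<inter> matchset u enc X" using psi unfolding matchset_def by auto
qed

lemma gen_ell2:
  assumes psi: "\<psi> \<in> ell2 T (V - X - {u})"
  shows "(\<lambda>a. if a \<in> asg T V \<and> restr X a = i \<and> a u = enc i
                  then \<psi> (restr (V - X - {u}) a) else 0) \<in> ell2 T V"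
proof -
  define W where "W = V - X - {u}"
  define P where "P = {a. a \<in> asg T V \<and> restr X a = i \<and> a u = enc i}"
  have inj: "inj_on (restr W) P"
  proof (rule inj_onI)
    fix a b assume a: "a \<in> P" and b: "b \<in> P" and e: "restr W a = restr W b"
    have aV: "a \<in> asg T V" and bV: "b \<in> asg T V" using a b P_def by auto
    show "a = b"
    proof (rule asg_ext[OF aV bV])
      fix x assume "x \<in> V"
      show "a x = b x"
      proof (cases "x \<in> X")
        case True 
        have "restr X a x = restr X b x" using a b P_def by simp
        then show ?thesis using True by (simp add: restr_apply)
      next
        case False
        show ?thesis
        proof (cases "x = u")
          case True then show ?thesis using a b P_def by simp
        next
          case False then have "x \<in> W" using \<open>x \<in> V\<close> \<open>x \<notin> X\<close> W_def by auto
          have "restr W a x = restr W b x" using e by simp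
          then show ?thesis using \<open>x \<in> W\<close> by (simp add: restr_apply)
        qed
      qed
    qed
  qed
  have ps: "(\<lambda>m. (cmod (\<psi> m))^2) summable_on UNIV" using psi unfolding ell2_def by blast
  then have "(\<lambda>m. (cmod (\<psi> m))^2) summable_on (restr W ` P)"
    by (rule summable_on_subset_banach) simp
  then have "((\<lambda>m. (cmod (\<psi> m))^2) \<circ> restr W) summable_on P"
    using summable_on_reindex[OF inj] by blast
  then have "(\<lambda>a. (cmod (\<psi> (restr W a)))^2) summable_on P" by (simp add: comp_def)
  then have "(\<lambda>a. (cmod (if a \<in> P then \<psi> (restr W a) else 0))^2) summable_on UNIV"
    by (rule summable_on_cong_neutral[THEN iffD1, rotated -1]) simp_all
  moreover have "(\<lambda>a. if a \<in> asg T V \<and> restr X a = i \<and> a u = enc i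
                  then \<psi> (restr (V - X - {u}) a) else 0) = (\<lambda>a. if a \<in> P then \<psi> (restr W a) else 0)"
    unfolding P_def W_def by (rule ext) simp
  ultimately show ?thesis unfolding ell2_def P_def by auto
qed

lemma cl_eq_match: "cl_eq T V X u enc \<subseteq> matchset u enc X"
proof -
  let ?G = "{\<phi>. \<exists>i\<in>asg T X. \<exists>\<psi>\<in>ell2 T (V - X - {u}).
        \<phi> = (\<lambda>a. if a \<in> asg T V \<and> restr X a = i \<and> a u = enc i
                  then \<psi> (restr (V - X - {u}) a) else 0)}"
  have G: "?G \<subseteq> ell2 T V \<inter> matchset u enc X"
  proof
    fix \<phi> assume "\<phi> \<in> ?G"
    then obtain i \<psi> where psi: "\<psi> \<in> ell2 T (V - X - {u})" and phi: "\<phi> = (\<lambda>a. if a \<in> asg T V \<and> restr X a = i \<and> a u = enc i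
                  then \<psi> (restr (V - X - {u}) a) else 0)" by blast
    have "\<phi> \<in> ell2 T V" unfolding phi by (rule gen_ell2[OF psi])
    moreover have "\<phi> \<in> matchset u enc X" unfolding matchset_def phi by (simp split: if_splits)
    ultimately show "\<phi> \<in> ell2 T V \<inter> matchset u enc X" by blast
  qed
  have "cl_eq T V X u enc \<subseteq> ell2 T V \<inter> matchset u enc X"
    unfolding cl_eq_def closed_span_def
    by (rule Inter_lower) (simp only: mem_Collect_eq closed_sub_match G simp_thms)
  then show ?thesis by blast
qed

lemma infsum_delta: "(\<Sum>\<^sub>\<infinity>b. f b * (if b = y then 1 else 0)) = (f y :: complex)"
proof -
  have "(\<Sum>\<^sub>\<infinity>b. f b * (if b = y then 1 else 0)) = (\<Sum>\<^sub>\<infinity>b\<in>{y}. f b * (if b = y then 1 else 0))"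
    by (rule infsum_cong_neutral) auto
  then show ?thesis by simp
qed

lemma delta_ell2: assumes "y \<in> asg T V" shows "(\<lambda>b. if b = y then 1 else 0) \<in> ell2 T V"
proof -
  have "(\<lambda>b. (cmod (if b = y then 1 else 0 :: complex))^2) summable_on UNIV"
    by (rule finite_nonzero_values_imp_summable_on) (simp add: Collect_conv_if)
  then show ?thesis using assms unfolding ell2_def by auto
qed

lemma l2norm_zero: "l2norm (\<lambda>a. 0) = 0" unfolding l2norm_def by simp

lemma in_supp: assumes "mixed T V K" "\<psi> \<in> ell2 T V" shows "kapply K \<psi> \<in> supp T V K"
  unfolding supp_def l2closure_def
proof (intro CollectI conjI exI)
  show "kapply K \<psi> \<in> ell2 T V" by (rule kapply_ell2[OF assms])
  show "\<forall>n::nat. (\<lambda>n. kapply K \<psi>) n \<in> kapply K ` ell2 T V" using assms(2) by blast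
  show "(\<lambda>n. l2norm (\<lambda>a. (\<lambda>n. kapply K \<psi>) n a - kapply K \<psi> a)) \<longlonglongrightarrow> 0"
    by (simp add: l2norm_zero)
qed

lemma mixed_pullbackS:
  assumes K: "mixed T Y K" and SW: "S \<subseteq> asg T W" and inj: "inj_on h S" and img: "h ` S \<subseteq> asg T Y"
  shows "mixed T W (\<lambda>c d. if c \<in> S \<and> d \<in> S then K (h c) (h d) else 0)"
  unfolding mixed_def
proof (intro conjI allI impI)
  fix a b :: "'a \<Rightarrow> 'b" assume "a \<notin> asg T W \<or> b \<notin> asg T W"
  then show "(if a \<in> S \<and> b \<in> S then K (h a) (h b) else 0) = 0" using SW by auto
next
  fix F :: "('a \<Rightarrow> 'b) set" and c :: "('a \<Rightarrow> 'b) \<Rightarrow> complex" assume F: "finite F" "F \<subseteq> asg T W"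
  define c' where "c' = c \<circ> inv_into (F \<inter> S) h"
  have injF: "inj_on h (F \<inter> S)" using inj inj_on_subset by blast
  have "(\<Sum>a\<in>F. \<Sum>b\<in>F. cnj (c a) * (if a \<in> S \<and> b \<in> S then K (h a) (h b) else 0) * c b)
      = (\<Sum>a\<in>F \<inter> S. \<Sum>b\<in>F \<inter> S. cnj (c a) * K (h a) (h b) * c b)"
  proof -
    have "(\<Sum>a\<in>F. \<Sum>b\<in>F. cnj (c a) * (if a \<in> S \<and> b \<in> S then K (h a) (h b) else 0) * c b)
       = (\<Sum>a\<in>F. if a \<in> S then (\<Sum>b\<in>F. if b \<in> S then cnj (c a) * K (h a) (h b) * c b else 0) else 0)"
      by (intro sum.cong refl) (auto intro!: sum.cong)
    also have "\<dots> = (\<Sum>a\<in>F. if a \<in> S then (\<Sum>b\<in>F \<inter> S. cnj (c a) * K (h a) (h b) * c b) else 0)"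
      by (rule sum.cong[OF refl]) (simp add: sum.inter_restrict[OF F(1)])
    also have "\<dots> = (\<Sum>a\<in>F \<inter> S. \<Sum>b\<in>F \<inter> S. cnj (c a) * K (h a) (h b) * c b)"
      by (simp add: sum.inter_restrict[OF F(1)] cong: if_cong)
    finally show ?thesis .
  qed
  also have "\<dots> = (\<Sum>a\<in>F \<inter> S. \<Sum>b\<in>F \<inter> S. cnj (c' (h a)) * K (h a) (h b) * c' (h b))"
    using injF by (intro sum.cong refl) (auto simp: c'_def)
  also have "\<dots> = (\<Sum>x\<in>h ` (F \<inter> S). \<Sum>y\<in>h ` (F \<inter> S). cnj (c' x) * K x y * c' y)"
    by (simp add: sum.reindex[OF injF])
  finally have eq: "(\<Sum>a\<in>F. \<Sum>b\<in>F. cnj (c a) * (if a \<in> S \<and> b \<in> S then K (h a) (h b) else 0) * c b)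
      = (\<Sum>x\<in>h ` (F \<inter> S). \<Sum>y\<in>h ` (F \<inter> S). cnj (c' x) * K x y * c' y)" .
  have "h ` (F \<inter> S) \<subseteq> asg T Y" using img by blast
  from mixed_form[OF K finite_imageI[OF finite_Int[OF disjI1[OF F(1)]]] this, of c']
  show "Im (\<Sum>a\<in>F. \<Sum>b\<in>F. cnj (c a) * (if a \<in> S \<and> b \<in> S then K (h a) (h b) else 0) * c b) = 0"
    "0 \<le> Re (\<Sum>a\<in>F. \<Sum>b\<in>F. cnj (c a) * (if a \<in> S \<and> b \<in> S then K (h a) (h b) else 0) * c b)"
    unfolding eq by auto
next
  have "(\<lambda>x. Re (K x x)) summable_on asg T Y" using K unfolding mixed_def by blast
  then have "(\<lambda>x. Re (K x x)) summable_on h ` S" using img by (rule summable_on_subset_banach)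
  then have "((\<lambda>x. Re (K x x)) \<circ> h) summable_on S" using summable_on_reindex[OF inj] by blast
  then show "(\<lambda>a. Re (if a \<in> S \<and> a \<in> S then K (h a) (h a) else 0)) summable_on asg T W"
    by (rule summable_on_cong_neutral[THEN iffD1, rotated -1]) (use SW in auto)
qed

lemma mixed_pullback:
  assumes K: "mixed T Y K" and inj: "inj_on h (asg T W)" and img: "h ` asg T W \<subseteq> asg T Y"
  shows "mixed T W (\<lambda>c d. if c \<in> asg T W \<and> d \<in> asg T W then K (h c) (h d) else 0)"
  by (rule mixed_pullbackS[OF K subset_refl inj img])

lemma restr_merge_out: "u \<notin> X \<Longrightarrow> restr X (merge {u} a c) = restr X a"
  unfolding restr_def merge_def by auto

lemma merge_restr_split: assumes "a \<in> asg T Y" "X \<subseteq> Y"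
  shows "merge X (restr (Y - X) a) (restr X a) = a"
  unfolding merge_def restr_def using asg_out[OF assms(1)] assms(2) by (auto intro!: ext)

lemma dir1:
  assumes rho: "mixed T Y \<rho>" and XY: "X \<subseteq> Y" and uY: "u \<notin> Y"
    and enc: "bij_betw enc (asg T X) (T u)"
    and ro: "mixed T (Y \<union> {u}) \<rho>o" and sup: "supp T (Y \<union> {u}) \<rho>o \<subseteq> cl_eq T (Y \<union> {u}) X u enc"
    and tr: "ptrace T Y {u} \<rho>o = \<rho>"
  shows "classical_in T Y X \<rho>"
proof -
  let ?V = "Y \<union> {u}"
  have col: "x u = enc (restr X x)" if "\<rho>o x y \<noteq> 0" for x y
  proof -
    have yV: "y \<in> asg T ?V" using that mixed_zero[OF ro] by blast
    have "kapply \<rho>o (\<lambda>b. if b = y then 1 else 0) \<in> supp T ?V \<rho>o"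
      by (rule in_supp[OF ro delta_ell2[OF yV]])
    moreover have "kapply \<rho>o (\<lambda>b. if b = y then 1 else 0) = (\<lambda>a. \<rho>o a y)"
      unfolding kapply_def by (rule ext, rule infsum_delta)
    ultimately have "(\<lambda>a. \<rho>o a y) \<in> matchset u enc X" using sup cl_eq_match by (metis subsetD)
    then show ?thesis using that unfolding matchset_def by auto
  qed
  have row: "y u = enc (restr X y)" if "\<rho>o x y \<noteq> 0" for x y
  proof -
    have "\<rho>o y x \<noteq> 0" using that mixed_herm[OF ro, of x y] by auto
    then show ?thesis by (rule col)
  qed
  have uX: "u \<notin> X" using XY uY by blast
  have injenc: "inj_on enc (asg T X)" using enc bij_betw_def by blast
  have blk: "\<rho> a b = 0" if a: "a \<in> asg T Y" and b: "b \<in> asg T Y" and ne: "restr X a \<noteq> restr X b" for a b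
  proof -
    have "\<rho> a b = (\<Sum>\<^sub>\<infinity>c\<in>asg T {u}. \<rho>o (merge {u} a c) (merge {u} b c))"
      using a b unfolding tr[symmetric] ptrace_def by simp
    also have "\<dots> = (\<Sum>\<^sub>\<infinity>c\<in>asg T {u}. 0)"
    proof (rule infsum_cong)
      fix c assume "c \<in> asg T {u}"
      show "\<rho>o (merge {u} a c) (merge {u} b c) = 0"
      proof (rule ccontr)
        assume nz: "\<rho>o (merge {u} a c) (merge {u} b c) \<noteq> 0"
        have m1: "merge {u} a c u = c u" "merge {u} b c u = c u" by (simp_all add: merge_def)
        have "c u = enc (restr X a)" using col[OF nz] restr_merge_out[OF uX, of a c] m1 by simp
        moreover have "c u = enc (restr X b)" using row[OF nz] restr_merge_out[OF uX, of b c] m1 by simp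
        moreover have "restr X a \<in> asg T X" "restr X b \<in> asg T X" using a b XY restr_asg by blast+
        ultimately show False using ne injenc by (metis inj_onD)
      qed
    qed
    finally show ?thesis by simp
  qed
  define R where "R i = (\<lambda>c d. if c \<in> asg T (Y - X) \<and> d \<in> asg T (Y - X)
      then \<rho> (merge X c i) (merge X d i) else 0)" for i
  have Rm: "mixed T (Y - X) (R i)" if i: "i \<in> asg T X" for i
    unfolding R_def
  proof (rule mixed_pullback[OF rho])
    show "inj_on (\<lambda>c. merge X c i) (asg T (Y - X))"
    proof (rule inj_onI)
      fix c d assume c: "c \<in> asg T (Y - X)" and d: "d \<in> asg T (Y - X)" and e: "merge X c i = merge X d i"
      show "c = d"
      proof (rule asg_ext[OF c d])
        fix x assume "x \<in> Y - X"
        then show "c x = d x" using fun_cong[OF e, of x] by (simp add: merge_def)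
      qed
    qed
    show "(\<lambda>c. merge X c i) ` asg T (Y - X) \<subseteq> asg T Y"
      using merge_asg[OF _ i] XY by (metis Diff_partition Un_commute image_subsetI sup_commute)
  qed
  show ?thesis unfolding classical_in_def
  proof (intro exI conjI allI ballI)
    show "mixed T (Y - X) (R i)" if "i \<in> asg T X" for i using Rm that by blast
    fix a b
    have XYX: "X \<union> (Y - X) = Y" using XY by blast
    show "((\<lambda>i. tensor T X (Y - X) (\<lambda>a' b'. if a' = i \<and> b' = i then 1 else 0) (R i) a b) has_sum \<rho> a b) (asg T X)"
    proof (cases "a \<in> asg T Y \<and> b \<in> asg T Y \<and> restr X a = restr X b")
      case False
      then have "\<rho> a b = 0" using blk mixed_zero[OF rho] by blast
      moreover have "tensor T X (Y - X) (\<lambda>a' b'. if a' = i \<and> b' = i then 1 else 0) (R i) a b = 0" for i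
        using False unfolding tensor_def XYX by auto
      ultimately show ?thesis by (simp add: has_sum_0)
    next
      case True
      then have a: "a \<in> asg T Y" and b: "b \<in> asg T Y" and eq: "restr X a = restr X b" by auto
      have i0: "restr X a \<in> asg T X" using a XY restr_asg by blast
      show ?thesis
      proof (rule has_sum_finite_neutralI[of "{restr X a}"])
        show "finite {restr X a}" "{restr X a} \<subseteq> asg T X" using i0 by auto
        show "tensor T X (Y - X) (\<lambda>a' b'. if a' = i \<and> b' = i then 1 else 0) (R i) a b = 0"
          if "i \<in> asg T X - {restr X a}" for i using that unfolding tensor_def by auto
        have ra: "restr (Y - X) a \<in> asg T (Y - X)" "restr (Y - X) b \<in> asg T (Y - X)"
          using a b restr_asg by blast+
        show "\<rho> a b = (\<Sum>i\<in>{restr X a}. tensor T X (Y - X) (\<lambda>a' b'. if a' = i \<and> b' = i then 1 else 0) (R i) a b)"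
          using a b eq ra merge_restr_split[OF a XY] merge_restr_split[OF b XY]
          unfolding tensor_def XYX R_def by simp
      qed
    qed
  qed
qed

lemma delta_gen:
  assumes aV: "a \<in> asg T V" and XV: "X \<subseteq> V"
  shows "(\<lambda>b. if b = a then (1::complex) else 0) =
    (\<lambda>b. if b \<in> asg T V \<and> restr X b = restr X a \<and> b u = a u
         then (\<lambda>w. if w = restr (V - X - {u}) a then 1 else 0) (restr (V - X - {u}) b) else 0)"
proof (rule ext)
  fix b
  show "(if b = a then 1 else 0) = (if b \<in> asg T V \<and> restr X b = restr X a \<and> b u = a u
         then (\<lambda>w. if w = restr (V - X - {u}) a then 1 else 0) (restr (V - X - {u}) b) else 0 :: complex)"
  proof (cases "b \<in> asg T V \<and> restr X b = restr X a \<and> b u = a u \<and> restr (V - X - {u}) b = restr (V - X - {u}) a")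
    case True
    then have bV: "b \<in> asg T V" and rX: "restr X b = restr X a" and bu: "b u = a u"
      and rW: "restr (V - X - {u}) b = restr (V - X - {u}) a" by auto
    have "b = a"
    proof (rule asg_ext[OF bV aV])
      fix x assume "x \<in> V"
      show "b x = a x"
      proof (cases "x \<in> X")
        case True
        then show ?thesis using rX[THEN fun_cong, of x] by (simp add: restr_apply)
      next
        case nx: False
        show ?thesis
        proof (cases "x = u")
          case True then show ?thesis using bu by simp
        next
          case False
          then have "x \<in> V - X - {u}" using nx \<open>x \<in> V\<close> by blast
          then show ?thesis using rW[THEN fun_cong, of x] by (simp add: restr_apply)
        qed
      qed
    qed
    then show ?thesis using True by simp
  next
    case False
    then show ?thesis using aV by auto
  qed
qed

lemma approx_in_cl_eq:
  assumes psi: "\<psi> \<in> ell2 T V" and XV: "X \<subseteq> V"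
    and van: "\<And>a. \<psi> a \<noteq> 0 \<Longrightarrow> a u = enc (restr X a)"
  shows "\<psi> \<in> cl_eq T V X u enc"
  unfolding cl_eq_def closed_span_def
proof (rule InterI, elim CollectE conjE)
  fix A assume cs: "closed_subspace T V A" and GA: "{\<phi>. \<exists>i\<in>asg T X. \<exists>\<psi>\<in>ell2 T (V - X - {u}).
        \<phi> = (\<lambda>a. if a \<in> asg T V \<and> restr X a = i \<and> a u = enc i
                  then \<psi> (restr (V - X - {u}) a) else 0)} \<subseteq> A"
  have A0: "(\<lambda>_. 0) \<in> A" and Aadd: "\<And>\<phi> g. \<phi> \<in> A \<Longrightarrow> g \<in> A \<Longrightarrow> (\<lambda>a. \<phi> a + g a) \<in> A"
    and Asc: "\<And>c g. g \<in> A \<Longrightarrow> (\<lambda>a. c * g a) \<in> A"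
    and Alim: "\<And>f g. (\<forall>n::nat. f n \<in> A) \<Longrightarrow> g \<in> ell2 T V \<Longrightarrow> (\<lambda>n. l2norm (\<lambda>a. f n a - g a)) \<longlonglongrightarrow> 0 \<Longrightarrow> g \<in> A"
    using cs unfolding closed_subspace_def by blast+
  have dA: "(\<lambda>b. if b = a then 1 else 0) \<in> A" if a: "a \<in> asg T V" "a u = enc (restr X a)" for a
  proof -
    have "restr (V - X - {u}) a \<in> asg T (V - X - {u})" using a restr_asg by blast
    then have "(\<lambda>w. if w = restr (V - X - {u}) a then 1 else 0) \<in> ell2 T (V - X - {u})"
      by (rule delta_ell2)
    moreover have "restr X a \<in> asg T X" using a XV restr_asg by blast
    ultimately have "(\<lambda>b. if b \<in> asg T V \<and> restr X b = restr X a \<and> b u = enc (restr X a)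
         then (\<lambda>w. if w = restr (V - X - {u}) a then 1 else 0) (restr (V - X - {u}) b) else 0) \<in> A"
      using GA by blast
    then show ?thesis using delta_gen[OF a(1) XV, of u] a(2) by simp
  qed
  have tr: "(\<lambda>b. if b \<in> G then \<psi> b else 0) \<in> A" if "finite G" for G
    using that
  proof (induction G rule: finite_induct)
    case empty then show ?case using A0 by simp
  next
    case (insert a G)
    show ?case
    proof (cases "\<psi> a = 0")
      case True
      then have "(\<lambda>b. if b \<in> insert a G then \<psi> b else 0) = (\<lambda>b. if b \<in> G then \<psi> b else 0)" by auto
      then show ?thesis using insert by simp
    next
      case False
      then have "a \<in> asg T V" using psi unfolding ell2_def by blast
      then have "(\<lambda>b. \<psi> a * (if b = a then 1 else 0)) \<in> A" using Asc dA van False by blast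
      then have "(\<lambda>b. (if b \<in> G then \<psi> b else 0) + \<psi> a * (if b = a then 1 else 0)) \<in> A"
        using Aadd insert by blast
      moreover have "(\<lambda>b. (if b \<in> G then \<psi> b else 0) + \<psi> a * (if b = a then 1 else 0))
          = (\<lambda>b. if b \<in> insert a G then \<psi> b else 0)" using insert(2) by auto
      ultimately show ?thesis by simp
    qed
  qed
  define h where "h = (\<lambda>b. (cmod (\<psi> b))^2)"
  have hs: "h summable_on UNIV" using psi unfolding ell2_def h_def by blast
  have h0: "h b \<ge> 0" for b unfolding h_def by simp
  have "\<exists>G. finite G \<and> G \<subseteq> UNIV \<and> dist (sum h G) (infsum h UNIV) \<le> 1 / (real n + 1)" for n :: nat
    by (rule infsum_finite_approximation[OF hs]) simp
  then obtain G where G: "\<And>n. finite (G n)" "\<And>n. dist (sum h (G n)) (infsum h UNIV) \<le> 1 / (real n + 1)"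
    by metis
  define f where "f n = (\<lambda>b. if b \<in> G n then \<psi> b else 0)" for n
  show "\<psi> \<in> A"
  proof (rule Alim[of f])
    show "\<forall>n. f n \<in> A" unfolding f_def using tr G(1) by blast
    show "\<psi> \<in> ell2 T V" by (rule psi)
    show "(\<lambda>n. l2norm (\<lambda>a. f n a - \<psi> a)) \<longlonglongrightarrow> 0"
    proof (rule Lim_null_comparison[where g="\<lambda>n. sqrt (1 / (real n + 1))"])
      show "(\<lambda>n. sqrt (1 / (real n + 1))) \<longlonglongrightarrow> 0"
        using tendsto_real_sqrt[OF LIMSEQ_inverse_real_of_nat]
        by (simp add: inverse_eq_divide add.commute)
      show "\<forall>\<^sub>F n in sequentially. norm (l2norm (\<lambda>a. f n a - \<psi> a)) \<le> sqrt (1 / (real n + 1))"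
      proof (rule always_eventually, rule allI)
        fix n
        have "(\<Sum>\<^sub>\<infinity>a. (cmod (f n a - \<psi> a))^2) = infsum h (UNIV - G n)"
          by (rule infsum_cong_neutral) (auto simp: f_def h_def)
        also have "\<dots> = infsum h UNIV - sum h (G n)"
          using infsum_Diff[OF hs summable_on_finite[OF G(1)], of n] G(1) by simp
        also have "\<dots> \<le> 1 / (real n + 1)" using G(2)[of n] by (simp add: dist_real_def)
        finally have "(\<Sum>\<^sub>\<infinity>a. (cmod (f n a - \<psi> a))^2) \<le> 1 / (real n + 1)" .
        then have "l2norm (\<lambda>a. f n a - \<psi> a) \<le> sqrt (1 / (real n + 1))"
          unfolding l2norm_def by (rule real_sqrt_le_mono)
        moreover have "l2norm (\<lambda>a. f n a - \<psi> a) \<ge> 0" unfolding l2norm_def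
          by (rule real_sqrt_ge_zero, rule infsum_nonneg) simp
        ultimately show "norm (l2norm (\<lambda>a. f n a - \<psi> a)) \<le> sqrt (1 / (real n + 1))"
          by simp
      qed
    qed
  qed
qed

lemma mixed_proj: assumes e: "e \<in> asg T W" shows "mixed T W (\<lambda>v w. if v = e \<and> w = e then 1 else 0)"
  unfolding mixed_def
proof (intro conjI allI impI)
  fix a b assume "a \<notin> asg T W \<or> b \<notin> asg T W"
  then show "(if a = e \<and> b = e then 1 else 0) = (0::complex)" using e by auto
next
  fix F :: "('a \<Rightarrow> 'b) set" and c :: "('a \<Rightarrow> 'b) \<Rightarrow> complex" assume F: "finite F" "F \<subseteq> asg T W"
  have "(\<Sum>a\<in>F. \<Sum>b\<in>F. cnj (c a) * (if a = e \<and> b = e then 1 else 0) * c b)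
      = (\<Sum>a\<in>F. if a = e then (\<Sum>b\<in>F. if b = e then cnj (c e) * c e else 0) else 0)"
    by (intro sum.cong refl) (auto intro!: sum.cong)
  also have "\<dots> = (if e \<in> F then cnj (c e) * c e else 0)"
    using F(1) by (simp add: sum.delta)
  finally have eq: "(\<Sum>a\<in>F. \<Sum>b\<in>F. cnj (c a) * (if a = e \<and> b = e then 1 else 0) * c b)
      = (if e \<in> F then cnj (c e) * c e else 0)" .
  have "cnj (c e) * c e = of_real ((Re (c e))^2 + (Im (c e))^2)"
    using complex_mult_cnj[of "c e"] by (simp add: mult.commute)
  then show "Im (\<Sum>a\<in>F. \<Sum>b\<in>F. cnj (c a) * (if a = e \<and> b = e then 1 else 0) * c b) = 0"
    "0 \<le> Re (\<Sum>a\<in>F. \<Sum>b\<in>F. cnj (c a) * (if a = e \<and> b = e then 1 else 0) * c b)"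
    unfolding eq by auto
next
  show "(\<lambda>a. Re (if a = e \<and> a = e then 1 else 0)) summable_on asg T W"
    by (rule finite_nonzero_values_imp_summable_on) (simp add: Collect_conv_if)
qed

lemma mixed_zero_kernel: "mixed T W (\<lambda>_ _. 0)"
  unfolding mixed_def by simp

lemma restr_restr: "X \<subseteq> Y \<Longrightarrow> restr X (restr Y x) = restr X x"
  unfolding restr_def by (rule ext) auto

definition emb :: "'v set \<Rightarrow> 'v \<Rightarrow> (('v \<Rightarrow> 'val) \<Rightarrow> 'val) \<Rightarrow> ('v \<Rightarrow> 'val) \<Rightarrow> ('v \<Rightarrow> 'val)" where
  "emb X u enc a = a(u := enc (restr X a))"

lemma emb_facts:
  assumes XY: "X \<subseteq> Y" and uY: "u \<notin> Y" and enc: "bij_betw enc (asg T X) (T u)" and a: "a \<in> asg T Y"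
  shows "emb X u enc a \<in> asg T (Y \<union> {u})" "restr Y (emb X u enc a) = a"
    "restr X (emb X u enc a) = restr X a" "emb X u enc a u = enc (restr X a)"
proof -
  have "restr X a \<in> asg T X" using a XY restr_asg by blast
  then have t: "enc (restr X a) \<in> T u" using enc bij_betw_apply by fast
  show "emb X u enc a \<in> asg T (Y \<union> {u})" using a t unfolding asg_def emb_def by auto
  show "restr Y (emb X u enc a) = a" unfolding emb_def restr_def using uY asg_out[OF a] by (auto intro!: ext)
  show "restr X (emb X u enc a) = restr X a" unfolding emb_def restr_def using uY XY by (auto intro!: ext)
  show "emb X u enc a u = enc (restr X a)" unfolding emb_def by simp
qed

lemma img_char:
  assumes XY: "X \<subseteq> Y" and uY: "u \<notin> Y" and enc: "bij_betw enc (asg T X) (T u)"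
  shows "x \<in> emb X u enc ` asg T Y \<longleftrightarrow> x \<in> asg T (Y \<union> {u}) \<and> x u = enc (restr X x)"
proof
  assume "x \<in> emb X u enc ` asg T Y"
  then obtain a where a: "a \<in> asg T Y" and x: "x = emb X u enc a" by blast
  show "x \<in> asg T (Y \<union> {u}) \<and> x u = enc (restr X x)" using emb_facts[OF XY uY enc a] x by simp
next
  assume x: "x \<in> asg T (Y \<union> {u}) \<and> x u = enc (restr X x)"
  have a: "restr Y x \<in> asg T Y" using x restr_asg by blast
  have "emb X u enc (restr Y x) = x"
  proof (rule ext)
    fix z show "emb X u enc (restr Y x) z = x z"
    proof (cases "z = u")
      case True then show ?thesis using x restr_restr[OF XY, of x] by (simp add: emb_def)
    next
      case False
      then show ?thesis using x asg_out[of x T "Y \<union> {u}" z] by (simp add: emb_def restr_def)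
    qed
  qed
  then show "x \<in> emb X u enc ` asg T Y" using a by (metis image_eqI)
qed

lemma classical_blk:
  assumes "classical_in T Y X \<rho>" and ne: "restr X a \<noteq> restr X b"
  shows "\<rho> a b = 0"
proof -
  obtain R where R: "((\<lambda>i. tensor T X (Y - X) (\<lambda>a' b'. if a' = i \<and> b' = i then 1 else 0) (R i) a b)
              has_sum \<rho> a b) (asg T X)"
    using assms(1) unfolding classical_in_def by blast
  have "((\<lambda>i. tensor T X (Y - X) (\<lambda>a' b'. if a' = i \<and> b' = i then 1 else 0) (R i) a b)
              has_sum 0) (asg T X)"
    by (rule has_sum_0) (use ne in \<open>auto simp: tensor_def\<close>)
  then show ?thesis using R has_sum_unique by blast
qed

definition rhoo :: "('v \<Rightarrow> 'val set) \<Rightarrow> 'v set \<Rightarrow> 'v set \<Rightarrow> 'v \<Rightarrow> (('v \<Rightarrow> 'val) \<Rightarrow> 'val) \<Rightarrow>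
   (('v \<Rightarrow> 'val) \<Rightarrow> ('v \<Rightarrow> 'val) \<Rightarrow> complex) \<Rightarrow> (('v \<Rightarrow> 'val) \<Rightarrow> ('v \<Rightarrow> 'val) \<Rightarrow> complex)" where
  "rhoo T Y X u enc \<rho> = (\<lambda>x y. if x \<in> emb X u enc ` asg T Y \<and> y \<in> emb X u enc ` asg T Y
      then \<rho> (restr Y x) (restr Y y) else 0)"

context
  fixes T :: "'v \<Rightarrow> 'val set" and Y X :: "'v set" and u :: 'v
    and enc :: "('v \<Rightarrow> 'val) \<Rightarrow> 'val"
    and \<rho> :: "('v \<Rightarrow> 'val) \<Rightarrow> ('v \<Rightarrow> 'val) \<Rightarrow> complex"
  assumes rho: "mixed T Y \<rho>" and XY: "X \<subseteq> Y" and uY: "u \<notin> Y"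
    and enc: "bij_betw enc (asg T X) (T u)"
    and cl: "classical_in T Y X \<rho>"
begin

lemma ro_mixed: "mixed T (Y \<union> {u}) (rhoo T Y X u enc \<rho>)"
  unfolding rhoo_def
proof (rule mixed_pullbackS[OF rho])
  show "emb X u enc ` asg T Y \<subseteq> asg T (Y \<union> {u})" using emb_facts(1)[OF XY uY enc] by blast
  show "inj_on (restr Y) (emb X u enc ` asg T Y)"
    by (rule inj_onI) (use emb_facts(2)[OF XY uY enc] in auto)
  show "restr Y ` emb X u enc ` asg T Y \<subseteq> asg T Y"
    using emb_facts(2)[OF XY uY enc] by auto
qed

lemma ro_ptrace: "ptrace T Y {u} (rhoo T Y X u enc \<rho>) = \<rho>"
proof (rule ext, rule ext)
  fix a b
  show "ptrace T Y {u} (rhoo T Y X u enc \<rho>) a b = \<rho> a b"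
  proof (cases "a \<in> asg T Y \<and> b \<in> asg T Y")
    case False then show ?thesis using mixed_zero[OF rho] unfolding ptrace_def by auto
  next
    case True
    then have a: "a \<in> asg T Y" and b: "b \<in> asg T Y" by auto
    have uX: "u \<notin> X" using XY uY by blast
    have injenc: "inj_on enc (asg T X)" using bij_betw_imp_inj_on[OF enc] .
    have rXa: "restr X a \<in> asg T X" using restr_asg[OF a XY] .
    have rXb: "restr X b \<in> asg T X" using restr_asg[OF b XY] .
    define c0 where "c0 = (\<lambda>x. if x = u then enc (restr X a) else undefined)"
    have c0: "c0 \<in> asg T {u}" unfolding c0_def asg_def using bij_betw_apply[OF enc rXa] by simp
    have mg: "merge {u} a c \<in> emb X u enc ` asg T Y \<longleftrightarrow> c u = enc (restr X a)"
      if c: "c \<in> asg T {u}" and a: "a \<in> asg T Y" for a c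
    proof -
      have "merge {u} a c \<in> asg T (Y \<union> {u})" using merge_asg[OF a c] .
      moreover have "merge {u} a c u = c u" by (simp add: merge_def)
      moreover have "restr X (merge {u} a c) = restr X a" by (rule restr_merge_out[OF uX])
      ultimately show ?thesis using img_char[OF XY uY enc, of "merge {u} a c"] by (simp only: simp_thms)
    qed
    have rm: "restr Y (merge {u} a c) = a" if a: "a \<in> asg T Y" for a c
    proof (rule ext)
      fix x show "restr Y (merge {u} a c) x = a x"
        using uY asg_out[OF a, of x] unfolding restr_def merge_def by auto
    qed
    have trm: "rhoo T Y X u enc \<rho> (merge {u} a c) (merge {u} b c) =
       (if c u = enc (restr X a) \<and> c u = enc (restr X b) then \<rho> a b else 0)" if c: "c \<in> asg T {u}" for c
      unfolding rhoo_def by (simp only: mg[OF c a] mg[OF c b] rm[OF a] rm[OF b])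
    have "ptrace T Y {u} (rhoo T Y X u enc \<rho>) a b =
        (\<Sum>\<^sub>\<infinity>c\<in>asg T {u}. rhoo T Y X u enc \<rho> (merge {u} a c) (merge {u} b c))"
      unfolding ptrace_def using a b by simp
    also have "\<dots> = (\<Sum>\<^sub>\<infinity>c\<in>{c0}. rhoo T Y X u enc \<rho> (merge {u} a c) (merge {u} b c))"
    proof (rule infsum_cong_neutral)
      fix c assume c: "c \<in> asg T {u} - {c0}"
      have "c u \<noteq> enc (restr X a)"
      proof
        assume cu: "c u = enc (restr X a)"
        have "c = c0"
        proof (rule asg_ext[of c T "{u}"])
          show "c \<in> asg T {u}" "c0 \<in> asg T {u}" using c c0 by auto
        qed (use cu c0_def in auto)
        then show False using c by blast
      qed
      then show "rhoo T Y X u enc \<rho> (merge {u} a c) (merge {u} b c) = 0" using trm c by simp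
    qed (use c0 in auto)
    also have "\<dots> = (if enc (restr X a) = enc (restr X b) then \<rho> a b else 0)"
      using trm[OF c0] by (simp add: c0_def)
    also have "\<dots> = \<rho> a b"
    proof (cases "restr X a = restr X b")
      case True then show ?thesis by simp
    next
      case False
      then have "enc (restr X a) \<noteq> enc (restr X b)" using injenc rXa rXb inj_onD by metis
      then show ?thesis using classical_blk[OF cl False] by simp
    qed
    finally show ?thesis .
  qed
qed

lemma ro_supp: "supp T (Y \<union> {u}) (rhoo T Y X u enc \<rho>) \<subseteq> cl_eq T (Y \<union> {u}) X u enc"
proof
  fix \<psi> assume "\<psi> \<in> supp T (Y \<union> {u}) (rhoo T Y X u enc \<rho>)"
  then obtain f where psi: "\<psi> \<in> ell2 T (Y \<union> {u})"
    and f: "\<And>n::nat. f n \<in> kapply (rhoo T Y X u enc \<rho>) ` ell2 T (Y \<union> {u})"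
    and lim: "(\<lambda>n. l2norm (\<lambda>a. f n a - \<psi> a)) \<longlonglongrightarrow> 0"
    unfolding supp_def l2closure_def by (auto simp only: mem_Collect_eq)
  have fe: "f n \<in> ell2 T (Y \<union> {u})" for n
  proof -
    obtain g where "g \<in> ell2 T (Y \<union> {u})" "f n = kapply (rhoo T Y X u enc \<rho>) g" using f[of n] by (auto simp only: image_iff)
    then show ?thesis using kapply_ell2[OF ro_mixed] by simp
  qed
  have fz: "f n a = 0" if "a \<notin> emb X u enc ` asg T Y" for n a
  proof -
    obtain g where "f n = kapply (rhoo T Y X u enc \<rho>) g" using f[of n] by (auto simp only: image_iff)
    then show ?thesis unfolding kapply_def rhoo_def using that by (simp only: simp_thms if_False mult_zero_left infsum_0)
  qed
  have van: "\<psi> a = 0" if "a \<notin> emb X u enc ` asg T Y" for a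
  proof -
    have "(\<lambda>n. f n a) \<longlonglongrightarrow> \<psi> a" by (rule l2_lim_pointwise[OF fe psi lim])
    moreover have "(\<lambda>n. f n a) = (\<lambda>n. 0)" using fz[OF that] by simp
    ultimately show ?thesis using LIMSEQ_unique tendsto_const by metis
  qed
  show "\<psi> \<in> cl_eq T (Y \<union> {u}) X u enc"
  proof (rule approx_in_cl_eq[OF psi])
    show "X \<subseteq> Y \<union> {u}" using XY by blast
    fix a assume "\<psi> a \<noteq> 0"
    then have "a \<in> emb X u enc ` asg T Y" using van by blast
    then show "a u = enc (restr X a)" using img_char[OF XY uY enc] by blast
  qed
qed

end

context
  fixes T :: "'v \<Rightarrow> 'val set" and Y X :: "'v set" and u :: 'v
    and enc :: "('v \<Rightarrow> 'val) \<Rightarrow> 'val"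
    and \<rho> :: "('v \<Rightarrow> 'val) \<Rightarrow> ('v \<Rightarrow> 'val) \<Rightarrow> complex"
  assumes rho: "mixed T Y \<rho>" and XY: "X \<subseteq> Y" and uY: "u \<notin> Y"
    and enc: "bij_betw enc (asg T X) (T u)"
    and cl: "classical_in T Y X \<rho>"
begin

lemma ro_sep: "separable T Y {u} (rhoo T Y X u enc \<rho>)"
proof -
  define ev where "ev t = (\<lambda>x. if x = u then t else (undefined :: 'val))" for t
  define I where "I = restr X ` {a \<in> asg T Y. \<rho> a a \<noteq> 0}"
  have "{a \<in> asg T Y. Re (\<rho> a a) \<noteq> 0} = {a \<in> asg T Y. \<rho> a a \<noteq> 0}"
    using mixed_diag(1)[OF rho] by (auto simp: complex_eq_iff)
  moreover have "countable {a \<in> asg T Y. Re (\<rho> a a) \<noteq> 0}"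
    by (rule summable_countable_real) (use rho in \<open>simp add: mixed_def\<close>)
  ultimately have cI: "countable I" unfolding I_def by simp
  have IX: "I \<subseteq> asg T X" unfolding I_def using restr_asg XY by blast
  define N where "N = to_nat_on I ` I"
  define sel where "sel = inv_into I (to_nat_on I)"
  have injI: "inj_on (to_nat_on I) I" by (rule inj_on_to_nat_on[OF cI])
  have sel1: "sel (to_nat_on I i) = i" if "i \<in> I" for i
    unfolding sel_def using inv_into_f_f[OF injI that] .
  have sel2: "sel n \<in> I" "to_nat_on I (sel n) = n" if "n \<in> N" for n
    using that unfolding N_def sel_def by (auto simp: inv_into_into f_inv_into_f)
  define Blk where "Blk i = (\<lambda>a b. if a \<in> {a \<in> asg T Y. restr X a = i} \<and> b \<in> {a \<in> asg T Y. restr X a = i}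
      then \<rho> (id a) (id b) else 0)" for i
  have Bm: "mixed T Y (Blk i)" for i unfolding Blk_def
    by (rule mixed_pullbackS[OF rho]) auto
  define Pj where "Pj t = (\<lambda>v w. if v = ev t \<and> w = ev t then 1 else (0::complex))" for t
  have Pm: "mixed T {u} (Pj t)" if "t \<in> T u" for t unfolding Pj_def
    by (rule mixed_proj) (use that in \<open>auto simp: asg_def ev_def\<close>)
  define R where "R n = (if n \<in> N then Blk (sel n) else (\<lambda>_ _. 0))" for n
  define L where "L n = (if n \<in> N then Pj (enc (sel n)) else (\<lambda>_ _. 0))" for n
  have RL: "mixed T Y (R n) \<and> mixed T {u} (L n)" for n
  proof (cases "n \<in> N")
    case True
    then have "enc (sel n) \<in> T u" using sel2(1) IX bij_betw_apply[OF enc] by blast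
    then show ?thesis using True Bm Pm unfolding R_def L_def by simp
  next
    case False then show ?thesis unfolding R_def L_def by (simp add: mixed_zero_kernel)
  qed
  have ru: "restr {u} x = ev (x u)" for x :: "'v \<Rightarrow> 'val"
    unfolding restr_def ev_def by (rule ext) auto
  have evinj: "ev s = ev t \<longleftrightarrow> s = t" for s t
    unfolding ev_def by (metis (mono_tags))
  have tens: "tensor T Y {u} (R n) (L n) x y = (if x \<in> asg T (Y \<union> {u}) \<and> y \<in> asg T (Y \<union> {u}) \<and> n \<in> N
      \<and> restr X x = sel n \<and> restr X y = sel n \<and> x u = enc (sel n) \<and> y u = enc (sel n)
      then \<rho> (restr Y x) (restr Y y) else 0)" for n x y
  proof (cases "x \<in> asg T (Y \<union> {u}) \<and> y \<in> asg T (Y \<union> {u}) \<and> n \<in> N")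
    case True
    have "restr Y x \<in> asg T Y" "restr Y y \<in> asg T Y" using True restr_asg by blast+
    then show ?thesis using True unfolding tensor_def R_def L_def Blk_def Pj_def
      by (simp add: ru evinj restr_restr[OF XY])
  next
    case False then show ?thesis unfolding tensor_def R_def L_def by auto
  qed
  show ?thesis unfolding separable_def
  proof (intro exI conjI allI)
    show "mixed T Y (R n)" "mixed T {u} (L n)" for n using RL by auto
    fix x y
    show "((\<lambda>n. tensor T Y {u} (R n) (L n) x y) has_sum rhoo T Y X u enc \<rho> x y) UNIV"
    proof (cases "x \<in> emb X u enc ` asg T Y \<and> y \<in> emb X u enc ` asg T Y \<and> \<rho> (restr Y x) (restr Y y) \<noteq> 0")
      case True
      then have xi: "x \<in> asg T (Y \<union> {u})" "x u = enc (restr X x)"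
        and yi: "y \<in> asg T (Y \<union> {u})" "y u = enc (restr X y)"
        and nz: "\<rho> (restr Y x) (restr Y y) \<noteq> 0"
        using img_char[OF XY uY enc] by blast+
      have rXY: "restr X (restr Y x) = restr X x" "restr X (restr Y y) = restr X y"
        using restr_restr[OF XY] by auto
      have eqX: "restr X x = restr X y"
        using classical_blk[OF cl, of "restr Y x" "restr Y y"] nz rXY by auto
      have "\<rho> (restr Y x) (restr Y x) \<noteq> 0"
      proof
        assume z: "\<rho> (restr Y x) (restr Y x) = 0"
        have "(cmod (\<rho> (restr Y x) (restr Y y)))^2 \<le> Re (\<rho> (restr Y x) (restr Y x)) * Re (\<rho> (restr Y y) (restr Y y))"
          by (rule mixed_cs[OF rho])
        then show False using z nz by simp
      qed
      moreover have "restr Y x \<in> asg T Y" using xi restr_asg by blast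
      ultimately have i0: "restr X x \<in> I" unfolding I_def using rXY by (metis (mono_tags, lifting) image_eqI mem_Collect_eq)
      define n0 where "n0 = to_nat_on I (restr X x)"
      have n0N: "n0 \<in> N" unfolding n0_def N_def using i0 by blast
      have sn0: "sel n0 = restr X x" unfolding n0_def using sel1[OF i0] .
      have ro: "rhoo T Y X u enc \<rho> x y = \<rho> (restr Y x) (restr Y y)"
        unfolding rhoo_def using True by simp
      show ?thesis
      proof (rule has_sum_finite_neutralI[of "{n0}"])
        show "finite {n0}" "{n0} \<subseteq> UNIV" by auto
        show "tensor T Y {u} (R n) (L n) x y = 0" if "n \<in> UNIV - {n0}" for n
        proof -
          have "\<not> (n \<in> N \<and> restr X x = sel n)"
          proof
            assume "n \<in> N \<and> restr X x = sel n"
            then have "n = n0" unfolding n0_def using sel2(2) by metis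
            then show False using that by simp
          qed
          then show ?thesis unfolding tens by auto
        qed
        show "rhoo T Y X u enc \<rho> x y = (\<Sum>n\<in>{n0}. tensor T Y {u} (R n) (L n) x y)"
          using ro xi yi eqX n0N sn0 unfolding tens by simp
      qed
    next
      case False
      have ro: "rhoo T Y X u enc \<rho> x y = 0"
        unfolding rhoo_def using False by auto
      have "tensor T Y {u} (R n) (L n) x y = 0" for n
      proof (rule ccontr)
        assume "tensor T Y {u} (R n) (L n) x y \<noteq> 0"
        then have c: "x \<in> asg T (Y \<union> {u})" "y \<in> asg T (Y \<union> {u})" "restr X x = sel n" "restr X y = sel n"
          "x u = enc (sel n)" "y u = enc (sel n)" "\<rho> (restr Y x) (restr Y y) \<noteq> 0"
          unfolding tens by (auto split: if_splits)
        then have "x \<in> emb X u enc ` asg T Y" "y \<in> emb X u enc ` asg T Y"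
          using img_char[OF XY uY enc] by auto
        then show False using False c(7) by blast
      qed
      then show ?thesis using ro by (simp add: has_sum_0)
    qed
  qed
qed

end

theorem lemma9:
  fixes T :: "'v \<Rightarrow> 'val set" and Y X :: "'v set" and u :: 'v
    and enc :: "('v \<Rightarrow> 'val) \<Rightarrow> 'val"
    and \<rho> :: "('v \<Rightarrow> 'val) \<Rightarrow> ('v \<Rightarrow> 'val) \<Rightarrow> complex"
  assumes "mixed T Y \<rho>" and "X \<subseteq> Y" and "u \<notin> Y"
    and "bij_betw enc (asg T X) (T u)"
  shows "sat T Y {} {u} (cl_eq T (Y \<union> {u}) X u enc) \<rho> \<longleftrightarrow> classical_in T Y X \<rho>"
proof
  assume "sat T Y {} {u} (cl_eq T (Y \<union> {u}) X u enc) \<rho>"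
  then obtain \<rho>o where m: "mixed T (Y \<union> {u}) \<rho>o"
    and s: "supp T (Y \<union> {u}) \<rho>o \<subseteq> cl_eq T (Y \<union> {u}) X u enc"
    and p: "ptrace T Y {u} \<rho>o = \<rho>"
    unfolding sat_def by auto
  show "classical_in T Y X \<rho>" by (rule dir1[OF assms m s p])
next
  assume c: "classical_in T Y X \<rho>"
  show "sat T Y {} {u} (cl_eq T (Y \<union> {u}) X u enc) \<rho>"
    unfolding sat_def
    using ro_mixed[OF assms c] ro_sep[OF assms c] ro_supp[OF assms c] ro_ptrace[OF assms c]
    by (intro exI[of _ "rhoo T Y X u enc \<rho>"]) simp
qed

end
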